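(* Let $A$ be a Noetherian integral domain whose field of fractions $K$ is infinite, let $M$ be a finitely generated torsion-free $A$-module with $n=\dim_K(K\otimes_A M)\ge 2$. Let $\operatorname{GP}(M)$ be the simplicial complex whose simplices are the nonempty finite subsets $Y\subseteq M$ in general position, i.e. such that every subset of $Y$ with at most $n$ elements is linearly independent over $K$ (in $K\otimes_A M$). Then the geometric realisation of $\operatorname{GP}(M)$ is contractible. *)

theory Defs
  imports "HOL-Analysis.Analysis" "HOL-Computational_Algebra.Fraction_Field"
begin

definition emb :: "'a::idom \<Rightarrow> 'a fract" where
  "emb a = Fract a 1"

definition is_ideal :: "'a::comm_ring_1 set \<Rightarrow> bool" where
  "is_ideal I \<longleftrightarrow> 0 \<in> I \<and> (\<forall>x\<in>I. \<forall>y\<in>I. x + y \<in> I) \<and> (\<forall>a x. x \<in> I \<longrightarrow> a * x \<in> I)"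

definition noetherian :: "'a::comm_ring_1 itself \<Rightarrow> bool" where
  "noetherian TYPE('a) \<longleftrightarrow>
     (\<forall>I::'a set. is_ideal I \<longrightarrow>
        (\<exists>F. finite F \<and> F \<subseteq> I \<and> I = {\<Sum>x\<in>F. c x * x | c. True}))"

text \<open>An A-submodule M of a K-vector space V (K = Frac A), where the
  K-vector space structure is given by sc.\<close>
definition A_submodule :: "('a::idom fract \<Rightarrow> 'v::ab_group_add \<Rightarrow> 'v) \<Rightarrow> 'v set \<Rightarrow> bool" where
  "A_submodule sc M \<longleftrightarrow> 0 \<in> M \<and> (\<forall>x\<in>M. \<forall>y\<in>M. x + y \<in> M)
      \<and> (\<forall>a x. x \<in> M \<longrightarrow> sc (emb a) x \<in> M)"

definition A_fin_gen :: "('a::idom fract \<Rightarrow> 'v::ab_group_add \<Rightarrow> 'v) \<Rightarrow> 'v set \<Rightarrow> bool" where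
  "A_fin_gen sc M \<longleftrightarrow>
     (\<exists>F. finite F \<and> F \<subseteq> M \<and> M = {\<Sum>x\<in>F. sc (emb (c x)) x | c. True})"

definition gp_simplices :: "('k::field \<Rightarrow> 'v::ab_group_add \<Rightarrow> 'v) \<Rightarrow> 'v set \<Rightarrow> 'v set set" where
  "gp_simplices sc M = {Y. Y \<noteq> {} \<and> finite Y \<and> Y \<subseteq> M \<and>
      (\<forall>Z\<subseteq>Y. card Z \<le> vector_space.dim sc M \<longrightarrow> \<not> module.dependent sc Z)}"

text \<open>Points are functions v \<Rightarrow> real (barycentric coordinates), nonnegative,
  with support a simplex and coordinates summing to 1.\<close>
definition real_carrier :: "'v set set \<Rightarrow> ('v \<Rightarrow> real) set" where
  "real_carrier S = {f. (\<forall>v. 0 \<le> f v) \<and> {v. f v \<noteq> 0} \<in> S \<and> sum f {v. f v \<noteq> 0} = 1}"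

definition real_face :: "'v set set \<Rightarrow> 'v set \<Rightarrow> ('v \<Rightarrow> real) set" where
  "real_face S \<sigma> = {f \<in> real_carrier S. {v. f v \<noteq> 0} \<subseteq> \<sigma>}"

text \<open>Weak (coherent) topology: U is open iff its trace on every closed simplex is
  open in the Euclidean topology of that simplex (= product topology restricted to
  functions supported in the finite set \<sigma>).\<close>
definition real_open :: "'v set set \<Rightarrow> ('v \<Rightarrow> real) set \<Rightarrow> bool" where
  "real_open S U \<longleftrightarrow> U \<subseteq> real_carrier S \<and>
     (\<forall>\<sigma>\<in>S. openin (subtopology (powertop_real UNIV) (real_face S \<sigma>)) (U \<inter> real_face S \<sigma>))"

lemma istopology_real_open: "istopology (real_open S)"
  unfolding istopology_def
proof safe
  fix U W assume u0: "real_open S U" and w0: "real_open S W"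
  show "real_open S (U \<inter> W)"
    unfolding real_open_def
  proof (intro conjI ballI)
    show "U \<inter> W \<subseteq> real_carrier S" using u0 unfolding real_open_def by blast
  next
    fix \<sigma> assume s: "\<sigma> \<in> S"
    have e: "U \<inter> W \<inter> real_face S \<sigma> = (U \<inter> real_face S \<sigma>) \<inter> (W \<inter> real_face S \<sigma>)" by blast
    show "openin (subtopology (powertop_real UNIV) (real_face S \<sigma>)) (U \<inter> W \<inter> real_face S \<sigma>)"
      unfolding e using u0 w0 s unfolding real_open_def by (auto intro!: openin_Int[of _ "U \<inter> real_face S \<sigma>" "W \<inter> real_face S \<sigma>"])
  qed
next
  fix \<K> assume h: "\<forall>K\<in>\<K>. real_open S K"
  show "real_open S (\<Union>\<K>)"
    unfolding real_open_def
  proof safe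
    fix x K assume "x \<in> K" "K \<in> \<K>" then show "x \<in> real_carrier S"
      using h unfolding real_open_def by blast
  next
    fix \<sigma> assume "\<sigma> \<in> S"
    have "\<Union>\<K> \<inter> real_face S \<sigma> = \<Union>((\<lambda>K. K \<inter> real_face S \<sigma>) ` \<K>)" by blast
    moreover have "\<forall>T\<in>(\<lambda>K. K \<inter> real_face S \<sigma>) ` \<K>.
        openin (subtopology (powertop_real UNIV) (real_face S \<sigma>)) T"
      using h \<open>\<sigma> \<in> S\<close> unfolding real_open_def by blast
    ultimately show "openin (subtopology (powertop_real UNIV) (real_face S \<sigma>)) (\<Union>\<K> \<inter> real_face S \<sigma>)"
      by (metis openin_Union)
  qed
qed

definition realisation :: "'v set set \<Rightarrow> ('v \<Rightarrow> real) topology" where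
  "realisation S = topology (real_open S)"

end

theory Submission
  imports Defs "HOL-Computational_Algebra.Polynomial"
begin

unbundle cardinal_syntax

definition supp :: "('v \<Rightarrow> real) \<Rightarrow> 'v set" where
  "supp p = {v. p v \<noteq> 0}"

definition downclosed :: "'v set set \<Rightarrow> bool" where
  "downclosed S \<longleftrightarrow> (\<forall>\<sigma>\<in>S. finite \<sigma> \<and> \<sigma> \<noteq> {} \<and> (\<forall>\<tau>. \<tau> \<subseteq> \<sigma> \<and> \<tau> \<noteq> {} \<longrightarrow> \<tau> \<in> S))"

lemma openin_realisation: "openin (realisation S) = real_open S"
  unfolding realisation_def using istopology_real_open topology_inverse' by blast

lemma real_open_carrier: "real_open S (real_carrier S)"
  unfolding real_open_def
proof (intro conjI ballI subset_refl)
  fix \<sigma> assume "\<sigma> \<in> S"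
  have "real_carrier S \<inter> real_face S \<sigma> = topspace (subtopology (powertop_real UNIV) (real_face S \<sigma>))"
    by (auto simp: real_face_def)
  then show "openin (subtopology (powertop_real UNIV) (real_face S \<sigma>)) (real_carrier S \<inter> real_face S \<sigma>)"
    by (metis openin_topspace)
qed

lemma topspace_realisation: "topspace (realisation S) = real_carrier S"
proof -
  have "\<And>U. real_open S U \<Longrightarrow> U \<subseteq> real_carrier S" by (simp add: real_open_def)
  then show ?thesis unfolding topspace_def openin_realisation
    using real_open_carrier by blast
qed

lemma face_eq:
  fixes S :: "'v set set"
  assumes d: "downclosed S" and t: "\<tau> \<in> S"
  shows "real_face S \<tau> = {q. (\<forall>v. 0 \<le> q v) \<and> (\<forall>v. v \<notin> \<tau> \<longrightarrow> q v = 0) \<and> sum q \<tau> = 1}"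
proof -
  have fin: "finite \<tau>" using d t by (simp add: downclosed_def)
  show ?thesis
  proof (intro set_eqI iffI)
    fix q assume q: "q \<in> real_face S \<tau>"
    then have s: "{v. q v \<noteq> 0} \<subseteq> \<tau>" and c: "q \<in> real_carrier S" unfolding real_face_def by blast+
    have e: "sum q \<tau> = sum q {v. q v \<noteq> 0}"
      by (rule sum.mono_neutral_right[OF fin s]) blast
    have "\<forall>v. 0 \<le> q v" "sum q {v. q v \<noteq> 0} = 1" using c unfolding real_carrier_def by blast+
    moreover have "\<forall>v. v \<notin> \<tau> \<longrightarrow> q v = 0" using s by blast
    ultimately show "q \<in> {q. (\<forall>v. 0 \<le> q v) \<and> (\<forall>v. v \<notin> \<tau> \<longrightarrow> q v = 0) \<and> sum q \<tau> = 1}"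
      using e by simp
  next
    fix q :: "'v \<Rightarrow> real" assume q: "q \<in> {q. (\<forall>v. 0 \<le> q v) \<and> (\<forall>v. v \<notin> \<tau> \<longrightarrow> q v = 0) \<and> sum q \<tau> = 1}"
    then have q1: "\<forall>v. 0 \<le> q v" and q2: "\<forall>v. v \<notin> \<tau> \<longrightarrow> q v = 0" and q3: "sum q \<tau> = 1" by simp_all
    have s: "{v. q v \<noteq> 0} \<subseteq> \<tau>" using q2 by blast
    have e: "sum q \<tau> = sum q {v. q v \<noteq> 0}"
      by (rule sum.mono_neutral_right[OF fin s]) blast
    have ne: "{v. q v \<noteq> 0} \<noteq> {}"
    proof
      assume "{v. q v \<noteq> 0} = {}"
      then have "sum q \<tau> = 0" using e by simp
      then show False using q3 by simp
    qed
    have "{v. q v \<noteq> 0} \<in> S" using d t s ne unfolding downclosed_def by blast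
    then have "q \<in> real_carrier S" using q1 q3 e unfolding real_carrier_def by simp
    then show "q \<in> real_face S \<tau>" using s unfolding real_face_def by blast
  qed
qed

lemma closedin_face:
  fixes S :: "'v set set"
  assumes d: "downclosed S" and t: "\<tau> \<in> S"
  shows "closedin (powertop_real UNIV) (real_face S \<tau>)"
proof -
  have fin: "finite \<tau>" using d t by (simp add: downclosed_def)
  let ?P = "powertop_real (UNIV::'v set)"
  have c1: "closedin ?P {q. 0 \<le> q v}" for v :: 'v
    using closedin_continuous_map_preimage[OF continuous_map_product_projection[of v UNIV "\<lambda>_. euclideanreal"], of "{0..}"]
    by (simp add: closed_atLeast)
  have c2: "closedin ?P {q. q v = 0 \<or> v \<in> \<tau>}" for v :: 'v
  proof (cases "v \<in> \<tau>")
    case True then show ?thesis using closedin_topspace[of ?P] by simp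
  next
    case False then show ?thesis
    using closedin_continuous_map_preimage[OF continuous_map_product_projection[of v UNIV "\<lambda>_. euclideanreal"], of "{0}"]
    by simp
  qed
  have cs: "continuous_map ?P euclideanreal (\<lambda>q. sum q \<tau>)"
    by (intro continuous_map_sum fin continuous_map_product_projection) auto
  have c3: "closedin ?P {q. sum q \<tau> = 1}"
    using closedin_continuous_map_preimage[OF cs, of "{1}"] by simp
  have e: "real_face S \<tau> = (\<Inter>v. {q. 0 \<le> q v}) \<inter> (\<Inter>v. {q. q v = 0 \<or> v \<in> \<tau>}) \<inter> {q. sum q \<tau> = 1}"
    unfolding face_eq[OF d t] by auto
  have "closedin ?P (\<Inter>v. {q. 0 \<le> q v})"
    by (rule closedin_Inter) (use c1 in auto)
  moreover have "closedin ?P (\<Inter>v. {q. q v = 0 \<or> v \<in> \<tau>})"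
    by (rule closedin_Inter) (use c2 in auto)
  ultimately show ?thesis unfolding e using c3 by (intro closedin_Int)
qed

definition RF :: "'v set set \<Rightarrow> 'v set \<Rightarrow> ('v \<Rightarrow> real) set" where
  "RF S F = {q \<in> real_carrier S. {v. q v \<noteq> 0} \<subseteq> F}"

lemma openin_RF:
  fixes S :: "'v set set"
  assumes d: "downclosed S" and F: "finite F" and U: "real_open S U"
  shows "openin (subtopology (powertop_real UNIV) (RF S F)) (U \<inter> RF S F)"
proof -
  let ?P = "powertop_real (UNIV::'v set)"
  let ?T = "{\<tau>. \<tau> \<in> S \<and> \<tau> \<subseteq> F}"
  have finT: "finite ?T" by (rule finite_subset[of _ "Pow F"]) (use F in auto)
  have RFe: "RF S F = (\<Union>\<tau>\<in>?T. real_face S \<tau>)"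
  proof (intro set_eqI iffI)
    fix q assume q: "q \<in> RF S F"
    then have "{v. q v \<noteq> 0} \<in> ?T" "q \<in> real_face S {v. q v \<noteq> 0}"
      unfolding RF_def real_face_def real_carrier_def by blast+
    then show "q \<in> (\<Union>\<tau>\<in>?T. real_face S \<tau>)" by blast
  next
    fix q assume "q \<in> (\<Union>\<tau>\<in>?T. real_face S \<tau>)"
    then show "q \<in> RF S F" unfolding RF_def real_face_def by blast
  qed
  have cl: "closedin ?P (real_face S \<tau> - U)" if "\<tau> \<in> ?T" for \<tau>
  proof -
    have t: "\<tau> \<in> S" using that by auto
    have o: "openin (subtopology ?P (real_face S \<tau>)) (U \<inter> real_face S \<tau>)"
      using U t by (simp add: real_open_def)
    have "closedin (subtopology ?P (real_face S \<tau>)) (real_face S \<tau> - U)"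
      unfolding closedin_def using o by (simp add: Diff_Diff_Int Int_commute)
    then show ?thesis using closedin_trans_full closedin_face[OF d t] by blast
  qed
  define C where "C = (\<Union>\<tau>\<in>?T. real_face S \<tau> - U)"
  have cC: "closedin ?P C" unfolding C_def using finT cl by (intro closedin_Union) auto
  have tp: "topspace ?P = UNIV" by simp
  have e: "U \<inter> RF S F = (topspace ?P - C) \<inter> RF S F" unfolding RFe C_def tp by blast
  have "openin ?P (topspace ?P - C)" using openin_diff[OF openin_topspace cC] .
  then show ?thesis unfolding e openin_subtopology by blast
qed


lemma carrier_in_face:
  assumes "p \<in> real_carrier S"
  shows "{v. p v \<noteq> 0} \<in> S" "p \<in> real_face S {v. p v \<noteq> 0}"
  using assms unfolding real_carrier_def real_face_def by blast+

lemma face_sub_carrier: "real_face S \<sigma> \<subseteq> real_carrier S"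
  unfolding real_face_def by blast

lemma glue:
  fixes S :: "'v set set" and H :: "real \<times> ('v\<Rightarrow>real) \<Rightarrow> ('v\<Rightarrow>real)"
  assumes d: "downclosed S"
    and car: "\<And>t p. t \<in> {0..1} \<Longrightarrow> p \<in> real_carrier S \<Longrightarrow> H (t,p) \<in> real_carrier S"
    and loc: "\<And>\<sigma>. \<sigma> \<in> S \<Longrightarrow> \<exists>F. finite F \<and> (\<forall>t\<in>{0..1}. \<forall>p\<in>real_face S \<sigma>. {v. H (t,p) v \<noteq> 0} \<subseteq> F)
        \<and> continuous_map (prod_topology (top_of_set {0..1}) (subtopology (powertop_real UNIV) (real_face S \<sigma>))) (powertop_real UNIV) H"
  shows "continuous_map (prod_topology (top_of_set {0..1}) (realisation S)) (realisation S) H"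
proof -
  let ?P = "powertop_real (UNIV::'v set)"
  let ?I = "top_of_set {0..1::real}"
  let ?X = "prod_topology ?I (realisation S)"
  have tX: "topspace ?X = {0..1} \<times> real_carrier S"
    by (simp add: topspace_realisation)
  have tF: "topspace (prod_topology ?I (subtopology ?P (real_face S \<sigma>))) = {0..1} \<times> real_face S \<sigma>" for \<sigma>
    by simp
  have Wsig: "openin (prod_topology ?I (subtopology ?P (real_face S \<sigma>))) {z \<in> {0..1} \<times> real_face S \<sigma>. H z \<in> U}"
    if U: "real_open S U" and s: "\<sigma> \<in> S" for U \<sigma>
  proof -
    obtain F where F: "finite F" and sF: "\<forall>t\<in>{0..1}. \<forall>p\<in>real_face S \<sigma>. {v. H (t,p) v \<noteq> 0} \<subseteq> F"
      and cm: "continuous_map (prod_topology ?I (subtopology ?P (real_face S \<sigma>))) ?P H"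
      using loc[OF s] by blast
    obtain Oo where Oo: "openin ?P Oo" and OU: "U \<inter> RF S F = Oo \<inter> RF S F"
      using openin_RF[OF d F U] unfolding openin_subtopology by blast
    have "openin (prod_topology ?I (subtopology ?P (real_face S \<sigma>)))
       {z \<in> topspace (prod_topology ?I (subtopology ?P (real_face S \<sigma>))). H z \<in> Oo}"
      using openin_continuous_map_preimage[OF cm Oo] .
    moreover have "{z \<in> topspace (prod_topology ?I (subtopology ?P (real_face S \<sigma>))). H z \<in> Oo}
        = {z \<in> {0..1} \<times> real_face S \<sigma>. H z \<in> U}"
    proof (intro set_eqI iffI)
      fix z assume z: "z \<in> {z \<in> topspace (prod_topology ?I (subtopology ?P (real_face S \<sigma>))). H z \<in> Oo}"
      then obtain t p where zz: "z = (t,p)" "t \<in> {0..1}" "p \<in> real_face S \<sigma>" unfolding tF by blast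
      have "H z \<in> real_carrier S" using car face_sub_carrier zz by blast
      moreover have "{v. H z v \<noteq> 0} \<subseteq> F" using sF zz by blast
      ultimately have "H z \<in> RF S F" unfolding RF_def by blast
      then show "z \<in> {z \<in> {0..1} \<times> real_face S \<sigma>. H z \<in> U}" using z zz OU by blast
    next
      fix z assume z: "z \<in> {z \<in> {0..1} \<times> real_face S \<sigma>. H z \<in> U}"
      then obtain t p where zz: "z = (t,p)" "t \<in> {0..1}" "p \<in> real_face S \<sigma>" by blast
      have "H z \<in> real_carrier S" using car face_sub_carrier zz by blast
      moreover have "{v. H z v \<noteq> 0} \<subseteq> F" using sF zz by blast
      ultimately have "H z \<in> RF S F" unfolding RF_def by blast
      then show "z \<in> {z \<in> topspace (prod_topology ?I (subtopology ?P (real_face S \<sigma>))). H z \<in> Oo}"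
        using z zz OU unfolding tF by blast
    qed
    ultimately show ?thesis by simp
  qed
  show ?thesis
    unfolding continuous_map_def
  proof (intro conjI allI impI)
    show "H \<in> topspace ?X \<rightarrow> topspace (realisation S)"
    proof (rule Pi_I)
      fix z assume "z \<in> topspace ?X"
      then obtain t p where "z = (t,p)" "t \<in> {0..1}" "p \<in> real_carrier S" unfolding tX by blast
      then show "H z \<in> topspace (realisation S)" unfolding topspace_realisation using car by blast
    qed
  next
    fix U assume "openin (realisation S) U"
    then have U: "real_open S U" by (simp add: openin_realisation)
    let ?W = "{z \<in> topspace ?X. H z \<in> U}"
    show "openin ?X ?W"
    proof (subst openin_subopen, intro ballI)
      fix z assume z: "z \<in> ?W"
      then obtain t0 p0 where zz: "z = (t0,p0)" "t0 \<in> {0..1}" "p0 \<in> real_carrier S" "H (t0,p0) \<in> U"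
        unfolding tX by blast
      define \<sigma>0 where "\<sigma>0 = {v. p0 v \<noteq> 0}"
      have s0: "\<sigma>0 \<in> S" "p0 \<in> real_face S \<sigma>0" using carrier_in_face[OF zz(3)] unfolding \<sigma>0_def by blast+
      have mem: "(t0,p0) \<in> {z \<in> {0..1} \<times> real_face S \<sigma>0. H z \<in> U}" using zz s0 by blast
      obtain U1 V1 where U1: "openin ?I U1" and V1: "openin (subtopology ?P (real_face S \<sigma>0)) V1"
        and t0U1: "t0 \<in> U1" and p0V1: "p0 \<in> V1" and UV1: "U1 \<times> V1 \<subseteq> {z \<in> {0..1} \<times> real_face S \<sigma>0. H z \<in> U}"
        using Wsig[OF U s0(1), unfolded openin_prod_topology_alt, rule_format, OF mem] by blast
      obtain e where e: "e > 0" and eU: "\<forall>x'\<in>{0..1}. dist x' t0 < e \<longrightarrow> x' \<in> U1"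
        using U1[unfolded openin_euclidean_subtopology_iff, THEN conjunct2, rule_format, OF t0U1] by blast
      define N where "N = {0..1::real} \<inter> cball t0 (e/2)"
      define N0 where "N0 = {0..1::real} \<inter> ball t0 (e/2)"
      have NU1: "N \<subseteq> U1" using eU e unfolding N_def by (auto simp: dist_commute)
      have "compact N" unfolding N_def by (intro compact_Int_closed) auto
      then have cN: "compactin ?I N"
        unfolding compactin_subtopology compactin_euclidean_iff N_def by blast
      have oN0: "openin ?I N0" unfolding N0_def by (simp add: openin_open_Int)
      have N0N: "N0 \<subseteq> N" unfolding N0_def N_def by auto
      define V where "V = {p \<in> real_carrier S. \<forall>t\<in>N. (t,p) \<in> ?W}"
      have oV: "real_open S V"
        unfolding real_open_def
      proof (intro conjI ballI)
        show "V \<subseteq> real_carrier S" unfolding V_def by blast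
      next
        fix \<sigma> assume s: "\<sigma> \<in> S"
        show "openin (subtopology ?P (real_face S \<sigma>)) (V \<inter> real_face S \<sigma>)"
        proof (subst openin_subopen, intro ballI)
          fix p1 assume p1: "p1 \<in> V \<inter> real_face S \<sigma>"
          have sub: "N \<times> {p1} \<subseteq> {z \<in> {0..1} \<times> real_face S \<sigma>. H z \<in> U}"
          proof
            fix z assume "z \<in> N \<times> {p1}"
            then obtain t where zt: "z = (t,p1)" "t \<in> N" by blast
            then have "(t,p1) \<in> ?W" using p1 unfolding V_def by blast
            moreover have "t \<in> {0..1}" using zt unfolding N_def by blast
            ultimately show "z \<in> {z \<in> {0..1} \<times> real_face S \<sigma>. H z \<in> U}" using zt p1 by blast
          qed
          have cp: "compactin (subtopology ?P (real_face S \<sigma>)) {p1}" using p1 by simp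
          obtain U' V' where "openin ?I U'" "openin (subtopology ?P (real_face S \<sigma>)) V'"
            "N \<subseteq> U'" "{p1} \<subseteq> V'" "U' \<times> V' \<subseteq> {z \<in> {0..1} \<times> real_face S \<sigma>. H z \<in> U}"
            by (rule Wallace_theorem_prod_topology[OF cN cp Wsig[OF U s] sub])
          note UV' = this(5)
          moreover have "V' \<subseteq> V \<inter> real_face S \<sigma>"
          proof
            fix p assume p: "p \<in> V'"
            then have pf: "p \<in> real_face S \<sigma>"
              using openin_subset[OF \<open>openin (subtopology ?P (real_face S \<sigma>)) V'\<close>] by auto
            then have pc: "p \<in> real_carrier S" using face_sub_carrier by blast
            have "\<forall>t\<in>N. (t,p) \<in> ?W"
            proof
              fix t assume "t \<in> N"
              then have "(t,p) \<in> {z \<in> {0..1} \<times> real_face S \<sigma>. H z \<in> U}" using UV' p \<open>N \<subseteq> U'\<close> by blast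
              then show "(t,p) \<in> ?W" unfolding tX using pc by blast
            qed
            then show "p \<in> V \<inter> real_face S \<sigma>" using pc pf unfolding V_def by blast
          qed
          ultimately show "\<exists>T. openin (subtopology ?P (real_face S \<sigma>)) T \<and> p1 \<in> T \<and> T \<subseteq> V \<inter> real_face S \<sigma>"
            using \<open>openin (subtopology ?P (real_face S \<sigma>)) V'\<close> \<open>{p1} \<subseteq> V'\<close> by blast
        qed
      qed
      have "openin ?X (N0 \<times> V)"
        using oN0 oV by (simp add: openin_prod_Times_iff openin_realisation)
      moreover have "z \<in> N0 \<times> V"
      proof -
        have "t0 \<in> N0" using zz e unfolding N0_def by simp
        moreover have "\<forall>t\<in>N. (t,p0) \<in> ?W"
        proof
          fix t assume "t \<in> N"
          then have "(t,p0) \<in> U1 \<times> V1" using NU1 p0V1 by blast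
          then have "(t,p0) \<in> {z \<in> {0..1} \<times> real_face S \<sigma>0. H z \<in> U}" using UV1 by blast
          then show "(t,p0) \<in> ?W" unfolding tX using zz(3) by blast
        qed
        ultimately show ?thesis using zz unfolding V_def by blast
      qed
      moreover have "N0 \<times> V \<subseteq> ?W" using N0N unfolding V_def by blast
      ultimately show "\<exists>T. openin ?X T \<and> z \<in> T \<and> T \<subseteq> ?W" by blast
    qed
  qed
qed


definition lo :: "real \<Rightarrow> real \<Rightarrow> real \<Rightarrow> real" where
  "lo u a b = max 0 (min b u - a)"
definition hi :: "real \<Rightarrow> real \<Rightarrow> real \<Rightarrow> real" where
  "hi u a b = (b - a) - lo u a b"

definition Sle :: "('v \<times> 'v) set \<Rightarrow> ('v \<Rightarrow> real) \<Rightarrow> 'v set \<Rightarrow> 'v \<Rightarrow> real" where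
  "Sle r p A x = sum p {y \<in> A. (y,x) \<in> r \<or> y = x}"
definition Slt :: "('v \<times> 'v) set \<Rightarrow> ('v \<Rightarrow> real) \<Rightarrow> 'v set \<Rightarrow> 'v \<Rightarrow> real" where
  "Slt r p A x = sum p {y \<in> A. (y,x) \<in> r \<and> y \<noteq> x}"

definition stairA :: "('v \<times> 'v) set \<Rightarrow> ('v \<Rightarrow> 'v) \<Rightarrow> ('v \<Rightarrow> 'v) \<Rightarrow> 'v set \<Rightarrow> real \<Rightarrow> ('v \<Rightarrow> real) \<Rightarrow> 'v \<Rightarrow> real" where
  "stairA r f g A t p v =
     (\<Sum>x\<in>{x\<in>A. f x = v}. lo (1-t) (Slt r p A x) (Sle r p A x))
   + (\<Sum>x\<in>{x\<in>A. g x = v}. hi (1-t) (Slt r p A x) (Sle r p A x))"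

definition stair :: "('v \<times> 'v) set \<Rightarrow> ('v \<Rightarrow> 'v) \<Rightarrow> ('v \<Rightarrow> 'v) \<Rightarrow> real \<times> ('v \<Rightarrow> real) \<Rightarrow> 'v \<Rightarrow> real" where
  "stair r f g = (\<lambda>(t,p). stairA r f g {v. p v \<noteq> 0} t p)"

lemma lo_nonneg: "0 \<le> lo u a b" by (simp add: lo_def)
lemma hi_nonneg: "a \<le> b \<Longrightarrow> 0 \<le> hi u a b" by (simp add: hi_def lo_def)
lemma lo_hi: "lo u a b + hi u a b = b - a" by (simp add: hi_def)
lemma lo_same: "lo u a a = 0" by (simp add: lo_def)
lemma hi_same: "hi u a a = 0" by (simp add: hi_def lo_def)
lemma lo_pos: "lo u a b \<noteq> 0 \<Longrightarrow> a < u" by (simp add: lo_def)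
lemma hi_pos: "a \<le> b \<Longrightarrow> hi u a b \<noteq> 0 \<Longrightarrow> u < b" by (auto simp: hi_def lo_def)
lemma lo_1: "a \<le> b \<Longrightarrow> b \<le> 1 \<Longrightarrow> lo 1 a b = b - a" by (simp add: lo_def)
lemma hi_1: "a \<le> b \<Longrightarrow> b \<le> 1 \<Longrightarrow> hi 1 a b = 0" by (simp add: hi_def lo_def)
lemma lo_0: "0 \<le> a \<Longrightarrow> 0 \<le> b \<Longrightarrow> lo 0 a b = 0" by (simp add: lo_def)
lemma hi_0: "0 \<le> a \<Longrightarrow> 0 \<le> b \<Longrightarrow> hi 0 a b = b - a" by (simp add: hi_def lo_def)

lemma Sle_Slt:
  assumes "finite A"
  shows "Sle r p A x = Slt r p A x + (if x \<in> A then p x else 0)"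
proof (cases "x \<in> A")
  case True
  have "{y \<in> A. (y,x) \<in> r \<or> y = x} = insert x {y \<in> A. (y,x) \<in> r \<and> y \<noteq> x}" using True by blast
  then show ?thesis using assms True unfolding Sle_def Slt_def by simp
next
  case False
  have "{y \<in> A. (y,x) \<in> r \<or> y = x} = {y \<in> A. (y,x) \<in> r \<and> y \<noteq> x}" using False by blast
  then show ?thesis using False unfolding Sle_def Slt_def by simp
qed

lemma Sle_mono:
  assumes "finite A" "\<forall>v. 0 \<le> p v"
  shows "0 \<le> Slt r p A x" "Slt r p A x \<le> Sle r p A x" "Sle r p A x \<le> sum p A"
proof -
  show "0 \<le> Slt r p A x" unfolding Slt_def using assms by (simp add: sum_nonneg)
  show "Slt r p A x \<le> Sle r p A x" unfolding Slt_def Sle_def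
    using assms by (intro sum_mono2) auto
  show "Sle r p A x \<le> sum p A" unfolding Sle_def
    using assms by (intro sum_mono2) auto
qed

lemma Sle_super:
  assumes "finite B" "A \<subseteq> B" "\<forall>v\<in>B-A. p v = 0"
  shows "Sle r p A x = Sle r p B x" "Slt r p A x = Slt r p B x"
proof -
  show "Sle r p A x = Sle r p B x" unfolding Sle_def
    by (rule sum.mono_neutral_left) (use assms in auto)
  show "Slt r p A x = Slt r p B x" unfolding Slt_def
    by (rule sum.mono_neutral_left) (use assms in auto)
qed

lemma stairA_super:
  assumes fin: "finite B" and AB: "A \<subseteq> B" and z: "\<forall>v\<in>B-A. p v = 0" and A: "A = {v. p v \<noteq> 0}"
  shows "stairA r f g A t p = stairA r f g B t p"
proof
  fix v
  have finA: "finite A" using fin AB finite_subset by blast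
  have e1: "Sle r p A x = Sle r p B x" "Slt r p A x = Slt r p B x" for x
    using Sle_super[OF fin AB z] by auto
  have zero: "Sle r p B x = Slt r p B x" if "x \<in> B - A" for x
    using Sle_Slt[OF fin, of r p x] that z by simp
  have s1: "(\<Sum>x\<in>{x\<in>A. f x = v}. lo (1-t) (Slt r p B x) (Sle r p B x))
      = (\<Sum>x\<in>{x\<in>B. f x = v}. lo (1-t) (Slt r p B x) (Sle r p B x))"
    proof (rule sum.mono_neutral_left)
      show "finite {x\<in>B. f x = v}" using fin by simp
      show "{x\<in>A. f x = v} \<subseteq> {x\<in>B. f x = v}" using AB by blast
      show "\<forall>i\<in>{x\<in>B. f x = v} - {x\<in>A. f x = v}. lo (1-t) (Slt r p B i) (Sle r p B i) = 0"
      proof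
        fix i assume "i \<in> {x\<in>B. f x = v} - {x\<in>A. f x = v}"
        then have "i \<in> B - A" by blast
        then show "lo (1-t) (Slt r p B i) (Sle r p B i) = 0" by (simp add: zero lo_same)
      qed
    qed
  have s2: "(\<Sum>x\<in>{x\<in>A. g x = v}. hi (1-t) (Slt r p B x) (Sle r p B x))
      = (\<Sum>x\<in>{x\<in>B. g x = v}. hi (1-t) (Slt r p B x) (Sle r p B x))"
    proof (rule sum.mono_neutral_left)
      show "finite {x\<in>B. g x = v}" using fin by simp
      show "{x\<in>A. g x = v} \<subseteq> {x\<in>B. g x = v}" using AB by blast
      show "\<forall>i\<in>{x\<in>B. g x = v} - {x\<in>A. g x = v}. hi (1-t) (Slt r p B i) (Sle r p B i) = 0"
      proof
        fix i assume "i \<in> {x\<in>B. g x = v} - {x\<in>A. g x = v}"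
        then have "i \<in> B - A" by blast
        then show "hi (1-t) (Slt r p B i) (Sle r p B i) = 0" by (simp add: zero hi_same)
      qed
    qed
  show "stairA r f g A t p v = stairA r f g B t p v"
    unfolding stairA_def e1 s1 s2 ..
qed


locale stairctx =
  fixes S :: "'v set set" and r :: "('v \<times> 'v) set" and p :: "'v \<Rightarrow> real"
  assumes d: "downclosed S" and pc: "p \<in> real_carrier S"
begin

definition A where "A = {v. p v \<noteq> 0}"

lemma A_S: "A \<in> S" and finA: "finite A" and pnn: "\<forall>v. 0 \<le> p v" and sA: "sum p A = 1"
  using pc d unfolding A_def real_carrier_def downclosed_def by blast+

lemma SS: "Slt r p A x \<le> Sle r p A x" "0 \<le> Slt r p A x" "Sle r p A x \<le> 1"
  using Sle_mono[OF finA pnn, of r x] sA by auto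

lemma stair_eq: "stair r f g (t,p) = stairA r f g A t p"
  unfolding stair_def A_def by simp

lemma stair_nonneg: "0 \<le> stair r f g (t,p) v"
  unfolding stair_eq stairA_def
  by (intro add_nonneg_nonneg sum_nonneg) (auto simp: lo_nonneg hi_nonneg SS)

lemma stair_support:
  "{v. stair r f g (t,p) v \<noteq> 0} \<subseteq>
     f ` {x\<in>A. lo (1-t) (Slt r p A x) (Sle r p A x) \<noteq> 0} \<union> g ` {x\<in>A. hi (1-t) (Slt r p A x) (Sle r p A x) \<noteq> 0}"
proof
  fix v assume v: "v \<in> {v. stair r f g (t,p) v \<noteq> 0}"
  show "v \<in> f ` {x\<in>A. lo (1-t) (Slt r p A x) (Sle r p A x) \<noteq> 0} \<union> g ` {x\<in>A. hi (1-t) (Slt r p A x) (Sle r p A x) \<noteq> 0}"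
  proof (rule ccontr)
    assume n: "v \<notin> f ` {x\<in>A. lo (1-t) (Slt r p A x) (Sle r p A x) \<noteq> 0} \<union> g ` {x\<in>A. hi (1-t) (Slt r p A x) (Sle r p A x) \<noteq> 0}"
    have "(\<Sum>x\<in>{x\<in>A. f x = v}. lo (1-t) (Slt r p A x) (Sle r p A x)) = 0"
      by (rule sum.neutral) (use n in blast)
    moreover have "(\<Sum>x\<in>{x\<in>A. g x = v}. hi (1-t) (Slt r p A x) (Sle r p A x)) = 0"
      by (rule sum.neutral) (use n in blast)
    ultimately have "stair r f g (t,p) v = 0" unfolding stair_eq stairA_def by simp
    then show False using v by simp
  qed
qed

lemma stair_sum: "sum (stair r f g (t,p)) (f ` A \<union> g ` A) = 1"
proof -
  let ?T = "f ` A \<union> g ` A"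
  have fT: "finite ?T" using finA by simp
  have "sum (stair r f g (t,p)) ?T =
      (\<Sum>v\<in>?T. \<Sum>x\<in>{x\<in>A. f x = v}. lo (1-t) (Slt r p A x) (Sle r p A x))
    + (\<Sum>v\<in>?T. \<Sum>x\<in>{x\<in>A. g x = v}. hi (1-t) (Slt r p A x) (Sle r p A x))"
    unfolding stair_eq stairA_def by (simp add: sum.distrib)
  also have "\<dots> = (\<Sum>x\<in>A. lo (1-t) (Slt r p A x) (Sle r p A x)) + (\<Sum>x\<in>A. hi (1-t) (Slt r p A x) (Sle r p A x))"
  proof -
    have gf: "f ` A \<subseteq> ?T" and gg: "g ` A \<subseteq> ?T" by blast+
    show ?thesis unfolding sum.group[OF finA fT gf] sum.group[OF finA fT gg] ..
  qed
  also have "\<dots> = (\<Sum>x\<in>A. Sle r p A x - Slt r p A x)"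
    by (simp add: sum.distrib[symmetric] lo_hi)
  also have "\<dots> = (\<Sum>x\<in>A. p x)"
    by (rule sum.cong) (auto simp: Sle_Slt[OF finA])
  finally show ?thesis using sA by simp
qed

lemma stair_supp_sub: "{v. stair r f g (t,p) v \<noteq> 0} \<subseteq> f ` A \<union> g ` A"
  using stair_support by blast

lemma stair_sum': "sum (stair r f g (t,p)) {v. stair r f g (t,p) v \<noteq> 0} = 1"
proof -
  have "sum (stair r f g (t,p)) {v. stair r f g (t,p) v \<noteq> 0} = sum (stair r f g (t,p)) (f ` A \<union> g ` A)"
    by (rule sum.mono_neutral_left) (use finA stair_supp_sub in auto)
  then show ?thesis using stair_sum by simp
qed

lemma stair_order:
  assumes tr: "trans r" and tot: "\<forall>x\<in>A. \<forall>y\<in>A. x \<noteq> y \<longrightarrow> (x,y) \<in> r \<or> (y,x) \<in> r"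
    and x: "x \<in> A" "lo (1-t) (Slt r p A x) (Sle r p A x) \<noteq> 0"
    and y: "y \<in> A" "hi (1-t) (Slt r p A y) (Sle r p A y) \<noteq> 0"
  shows "x = y \<or> (x,y) \<in> r"
proof (rule ccontr)
  assume n: "\<not> (x = y \<or> (x,y) \<in> r)"
  then have yx: "(y,x) \<in> r" "x \<noteq> y" using tot x y by blast+
  have "{z\<in>A. (z,y) \<in> r \<or> z = y} \<subseteq> {z\<in>A. (z,x) \<in> r \<and> z \<noteq> x}"
  proof
    fix z assume z: "z \<in> {z\<in>A. (z,y) \<in> r \<or> z = y}"
    then have "(z,x) \<in> r" using yx tr unfolding trans_def by blast
    moreover have "z \<noteq> x" using z n by blast
    ultimately show "z \<in> {z\<in>A. (z,x) \<in> r \<and> z \<noteq> x}" using z by blast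
  qed
  then have "Sle r p A y \<le> Slt r p A x" unfolding Sle_def Slt_def
    using finA pnn by (intro sum_mono2) auto
  moreover have "Slt r p A x < 1 - t" using lo_pos[OF x(2)] .
  moreover have "1 - t < Sle r p A y" using hi_pos[OF SS(1) y(2)] .
  ultimately show False by simp
qed

lemma stair_carrier:
  assumes tr: "trans r" and tot: "\<forall>x\<in>A. \<forall>y\<in>A. x \<noteq> y \<longrightarrow> (x,y) \<in> r \<or> (y,x) \<in> r"
    and ok: "\<And>P Q. P \<subseteq> A \<Longrightarrow> Q \<subseteq> A \<Longrightarrow> (\<forall>x\<in>P. \<forall>y\<in>Q. x = y \<or> (x,y) \<in> r) \<Longrightarrow>
                f ` P \<union> g ` Q \<noteq> {} \<Longrightarrow> f ` P \<union> g ` Q \<in> S"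
  shows "stair r f g (t,p) \<in> real_carrier S"
proof -
  let ?P = "{x\<in>A. lo (1-t) (Slt r p A x) (Sle r p A x) \<noteq> 0}"
  let ?Q = "{x\<in>A. hi (1-t) (Slt r p A x) (Sle r p A x) \<noteq> 0}"
  have ord: "\<forall>x\<in>?P. \<forall>y\<in>?Q. x = y \<or> (x,y) \<in> r"
    using stair_order[OF tr tot] by blast
  have ne: "{v. stair r f g (t,p) v \<noteq> 0} \<noteq> {}"
  proof
    assume "{v. stair r f g (t,p) v \<noteq> 0} = {}"
    then show False using stair_sum'[of f g t] by simp
  qed
  then have ne2: "f ` ?P \<union> g ` ?Q \<noteq> {}" using stair_support[of f g t] by blast
  have "f ` ?P \<union> g ` ?Q \<in> S" by (rule ok) (use ord ne2 in auto)
  then have "{v. stair r f g (t,p) v \<noteq> 0} \<in> S"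
    using d stair_support[of f g t] ne unfolding downclosed_def by blast
  then show ?thesis unfolding real_carrier_def using stair_nonneg stair_sum' by blast
qed

lemma stair_0: "stair r f g (0,p) = (\<lambda>v. \<Sum>x\<in>{x\<in>A. f x = v}. p x)"
proof
  fix v
  have "lo 1 (Slt r p A x) (Sle r p A x) = p x" if "x \<in> A" for x
  proof -
    have e: "Sle r p A x = Slt r p A x + p x" using Sle_Slt[OF finA, of r p x] that by simp
    show ?thesis using lo_1[OF SS(1)[of x] SS(3)[of x]] e by simp
  qed
  moreover have "hi 1 (Slt r p A x) (Sle r p A x) = 0" for x
    using hi_1[OF SS(1) SS(3)] by simp
  ultimately show "stair r f g (0,p) v = (\<Sum>x\<in>{x\<in>A. f x = v}. p x)"
    unfolding stair_eq stairA_def by simp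
qed

lemma stair_1: "stair r f g (1,p) = (\<lambda>v. \<Sum>x\<in>{x\<in>A. g x = v}. p x)"
proof
  fix v
  have "hi 0 (Slt r p A x) (Sle r p A x) = p x" if "x \<in> A" for x
  proof -
    have e: "Sle r p A x = Slt r p A x + p x" using Sle_Slt[OF finA, of r p x] that by simp
    have nn: "0 \<le> Sle r p A x" using SS(1)[of x] SS(2)[of x] by linarith
    show ?thesis using hi_0[OF SS(2)[of x] nn] e by simp
  qed
  moreover have "lo 0 (Slt r p A x) (Sle r p A x) = 0" for x
  proof -
    have nn: "0 \<le> Sle r p A x" using SS(1)[of x] SS(2)[of x] by linarith
    show ?thesis using lo_0[OF SS(2)[of x] nn] .
  qed
  ultimately show "stair r f g (1,p) v = (\<Sum>x\<in>{x\<in>A. g x = v}. p x)"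
    unfolding stair_eq stairA_def by simp
qed

end


lemma stair_cont:
  fixes S :: "'v set set"
  assumes d: "downclosed S" and s: "\<sigma> \<in> S"
  shows "continuous_map (prod_topology (top_of_set {0..1}) (subtopology (powertop_real UNIV) (real_face S \<sigma>)))
           (powertop_real UNIV) (stair r f g)"
proof -
  let ?Z = "prod_topology (top_of_set {0..1::real}) (subtopology (powertop_real (UNIV::'v set)) (real_face S \<sigma>))"
  have fin: "finite \<sigma>" using d s unfolding downclosed_def by blast
  have cfst: "continuous_map ?Z euclideanreal fst"
    using continuous_map_fst[of "top_of_set {0..1::real}" "subtopology (powertop_real (UNIV::'v set)) (real_face S \<sigma>)"]
    unfolding continuous_map_in_subtopology by blast
  have csnd: "continuous_map ?Z (powertop_real UNIV) snd"
    using continuous_map_snd[of "top_of_set {0..1::real}" "subtopology (powertop_real (UNIV::'v set)) (real_face S \<sigma>)"]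
    unfolding continuous_map_in_subtopology by blast
  have cp: "continuous_map ?Z euclideanreal (\<lambda>z. snd z y)" for y
    using continuous_map_compose[OF csnd continuous_map_product_projection[of y UNIV "\<lambda>_. euclideanreal"]]
    by (simp add: o_def)
  have cSle: "continuous_map ?Z euclideanreal (\<lambda>z. Sle r (snd z) \<sigma> x)" for x
    unfolding Sle_def using fin by (intro continuous_map_sum cp) auto
  have cSlt: "continuous_map ?Z euclideanreal (\<lambda>z. Slt r (snd z) \<sigma> x)" for x
    unfolding Slt_def using fin by (intro continuous_map_sum cp) auto
  have clo: "continuous_map ?Z euclideanreal (\<lambda>z. lo (1 - fst z) (Slt r (snd z) \<sigma> x) (Sle r (snd z) \<sigma> x))" for x
  proof -
    have c1: "continuous_map ?Z euclideanreal (\<lambda>z. 1::real)" by simp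
    have c0: "continuous_map ?Z euclideanreal (\<lambda>z. 0::real)" by simp
    show ?thesis unfolding lo_def by (intro continuous_map_real_max continuous_map_real_min continuous_map_diff
        c0 c1 cfst cSle cSlt)
  qed
  have chi: "continuous_map ?Z euclideanreal (\<lambda>z. hi (1 - fst z) (Slt r (snd z) \<sigma> x) (Sle r (snd z) \<sigma> x))" for x
    unfolding hi_def by (intro continuous_map_diff clo cSle cSlt)
  have cG: "continuous_map ?Z (powertop_real UNIV) (\<lambda>z. stairA r f g \<sigma> (fst z) (snd z))"
    unfolding continuous_map_componentwise_UNIV stairA_def
    using fin by (intro allI continuous_map_add continuous_map_sum clo chi) auto
  show ?thesis
  proof (rule continuous_map_eq[OF cG])
    fix z assume "z \<in> topspace ?Z"
    then obtain t p where z: "z = (t,p)" and pf: "p \<in> real_face S \<sigma>" by auto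
    then have sub: "{v. p v \<noteq> 0} \<subseteq> \<sigma>" unfolding real_face_def by blast
    have "stairA r f g {v. p v \<noteq> 0} t p = stairA r f g \<sigma> t p"
      by (rule stairA_super[OF fin sub]) auto
    then show "stairA r f g \<sigma> (fst z) (snd z) = stair r f g z" unfolding z stair_def by simp
  qed
qed


lemma stair_homotopy:
  fixes S :: "'v set set"
  assumes d: "downclosed S" and tr: "trans r"
    and tot: "\<And>\<sigma> x y. \<sigma> \<in> S \<Longrightarrow> x \<in> \<sigma> \<Longrightarrow> y \<in> \<sigma> \<Longrightarrow> x \<noteq> y \<Longrightarrow> (x,y) \<in> r \<or> (y,x) \<in> r"
    and ok: "\<And>\<sigma> P Q. \<sigma> \<in> S \<Longrightarrow> P \<subseteq> \<sigma> \<Longrightarrow> Q \<subseteq> \<sigma> \<Longrightarrow> (\<forall>x\<in>P. \<forall>y\<in>Q. x = y \<or> (x,y) \<in> r) \<Longrightarrow>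
                f ` P \<union> g ` Q \<noteq> {} \<Longrightarrow> f ` P \<union> g ` Q \<in> S"
  shows "homotopic_with (\<lambda>_. True) (realisation S) (realisation S) (\<lambda>p. stair r f g (0,p)) (\<lambda>p. stair r f g (1,p))"
  unfolding homotopic_with_def
proof (intro exI[of _ "stair r f g"] conjI allI ballI)
  show "continuous_map (prod_topology (top_of_set {0..1}) (realisation S)) (realisation S) (stair r f g)"
  proof (rule glue[OF d])
    fix t :: real and p assume t: "t \<in> {0..1}" and p: "p \<in> real_carrier S"
    interpret stairctx S r p using d p by unfold_locales
    show "stair r f g (t,p) \<in> real_carrier S"
    proof (rule stair_carrier[OF tr])
      show "\<forall>x\<in>A. \<forall>y\<in>A. x \<noteq> y \<longrightarrow> (x,y) \<in> r \<or> (y,x) \<in> r" using tot[OF A_S] by blast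
      show "\<And>P Q. P \<subseteq> A \<Longrightarrow> Q \<subseteq> A \<Longrightarrow> (\<forall>x\<in>P. \<forall>y\<in>Q. x = y \<or> (x,y) \<in> r) \<Longrightarrow>
                f ` P \<union> g ` Q \<noteq> {} \<Longrightarrow> f ` P \<union> g ` Q \<in> S" by (rule ok[OF A_S])
    qed
  next
    fix \<sigma> assume s: "\<sigma> \<in> S"
    have fin: "finite \<sigma>" using d s unfolding downclosed_def by blast
    have "\<forall>t\<in>{0..1}. \<forall>p\<in>real_face S \<sigma>. {v. stair r f g (t,p) v \<noteq> 0} \<subseteq> f ` \<sigma> \<union> g ` \<sigma>"
    proof (intro ballI)
      fix t :: real and p assume "p \<in> real_face S \<sigma>"
      then have p: "p \<in> real_carrier S" and sub: "{v. p v \<noteq> 0} \<subseteq> \<sigma>" unfolding real_face_def by blast+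
      interpret stairctx S r p using d p by unfold_locales
      show "{v. stair r f g (t,p) v \<noteq> 0} \<subseteq> f ` \<sigma> \<union> g ` \<sigma>"
        using stair_supp_sub[of f g t] sub unfolding A_def by blast
    qed
    then show "\<exists>F. finite F \<and> (\<forall>t\<in>{0..1}. \<forall>p\<in>real_face S \<sigma>. {v. stair r f g (t,p) v \<noteq> 0} \<subseteq> F)
        \<and> continuous_map (prod_topology (top_of_set {0..1}) (subtopology (powertop_real UNIV) (real_face S \<sigma>))) (powertop_real UNIV) (stair r f g)"
      using fin stair_cont[OF d s] by (intro exI[of _ "f ` \<sigma> \<union> g ` \<sigma>"] conjI) simp_all
  qed
next
  fix x show "stair r f g (0,x) = stair r f g (0,x)" by (rule refl)
next
  fix x show "stair r f g (1,x) = stair r f g (1,x)" by (rule refl)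
qed (rule TrueI)


lemma contract:
  fixes S :: "'v set set" and g :: "'v \<Rightarrow> 'v"
  assumes d: "downclosed S" and tr: "trans r"
    and tot: "\<And>\<sigma> x y. \<sigma> \<in> S \<Longrightarrow> x \<in> \<sigma> \<Longrightarrow> y \<in> \<sigma> \<Longrightarrow> x \<noteq> y \<Longrightarrow> (x,y) \<in> r \<or> (y,x) \<in> r"
    and ok1: "\<And>\<sigma> P Q. \<sigma> \<in> S \<Longrightarrow> P \<subseteq> \<sigma> \<Longrightarrow> Q \<subseteq> \<sigma> \<Longrightarrow> (\<forall>x\<in>P. \<forall>y\<in>Q. x = y \<or> (x,y) \<in> r) \<Longrightarrow>
                P \<union> g ` Q \<noteq> {} \<Longrightarrow> P \<union> g ` Q \<in> S"
    and ok2: "\<And>\<sigma> P Q. \<sigma> \<in> S \<Longrightarrow> P \<subseteq> \<sigma> \<Longrightarrow> Q \<subseteq> \<sigma> \<Longrightarrow>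
                g ` P \<union> (\<lambda>_. w) ` Q \<noteq> {} \<Longrightarrow> g ` P \<union> (\<lambda>_. w) ` Q \<in> S"
  shows "contractible_space (realisation S)"
proof -
  let ?X = "realisation S"
  define G where "G p = (\<lambda>v. \<Sum>x\<in>{x\<in>{v. p v \<noteq> 0}. g x = v}. p x)" for p :: "'v \<Rightarrow> real"
  define a where "a = (\<lambda>v::'v. if v = w then 1 else (0::real))"
  have h1: "homotopic_with (\<lambda>_. True) ?X ?X (\<lambda>p. stair r id g (0,p)) (\<lambda>p. stair r id g (1,p))"
    by (rule stair_homotopy[OF d tr tot]) (use ok1 in auto)
  have h2: "homotopic_with (\<lambda>_. True) ?X ?X (\<lambda>p. stair r g (\<lambda>_. w) (0,p)) (\<lambda>p. stair r g (\<lambda>_. w) (1,p))"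
    by (rule stair_homotopy[OF d tr tot]) (use ok2 in auto)
  have h1': "homotopic_with (\<lambda>_. True) ?X ?X id G"
  proof (rule homotopic_with_eq[OF h1])
    fix p assume "p \<in> topspace ?X"
    then have p: "p \<in> real_carrier S" by (simp add: topspace_realisation)
    interpret stairctx S r p using d p by unfold_locales
    show "id p = stair r id g (0,p)"
    proof
      fix v
      have "(\<Sum>x\<in>{x\<in>A. id x = v}. p x) = p v"
      proof (cases "v \<in> A")
        case True
        then have "{x\<in>A. id x = v} = {v}" by auto
        then show ?thesis by simp
      next
        case False
        then have "{x\<in>A. id x = v} = {}" by auto
        then show ?thesis using False unfolding A_def by simp
      qed
      then show "id p v = stair r id g (0,p) v" unfolding stair_0 by simp
    qed
    show "G p = stair r id g (1,p)" unfolding stair_1 G_def A_def by simp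
  qed simp
  have h2': "homotopic_with (\<lambda>_. True) ?X ?X G (\<lambda>p. a)"
  proof (rule homotopic_with_eq[OF h2])
    fix p assume "p \<in> topspace ?X"
    then have p: "p \<in> real_carrier S" by (simp add: topspace_realisation)
    interpret stairctx S r p using d p by unfold_locales
    show "G p = stair r g (\<lambda>_. w) (0,p)" unfolding stair_0 G_def A_def by simp
    show "a = stair r g (\<lambda>_. w) (1,p)"
    proof
      fix v
      have "(\<Sum>x\<in>{x\<in>A. w = v}. p x) = a v"
      proof (cases "v = w")
        case True
        then have "{x\<in>A. w = v} = A" by auto
        then show ?thesis using sA True unfolding a_def by simp
      next
        case False
        then show ?thesis unfolding a_def by simp
      qed
      then show "a v = stair r g (\<lambda>_. w) (1,p) v" unfolding stair_1 by simp
    qed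
  qed simp
  have "homotopic_with (\<lambda>_. True) ?X ?X id (\<lambda>p. a)"
    by (rule homotopic_with_trans[OF h1' h2'])
  then show ?thesis unfolding contractible_space_def by blast
qed


lemma fin_less_inf: "finite A \<Longrightarrow> \<not> finite B \<Longrightarrow> |A| <o |B|"
  using finite_ordLess_infinite[OF card_of_Well_order card_of_Well_order] by (simp add: Field_card_of)

lemma lists_len_card:
  assumes inf: "\<not> finite X"
  shows "|{xs \<in> lists X. length xs = k}| \<le>o |X|"
proof (induction k)
  case 0
  have "finite {xs \<in> lists X. length xs = 0}" by simp
  then show ?case using fin_less_inf[OF _ inf] ordLess_imp_ordLeq by blast
next
  case (Suc k)
  have e: "{xs \<in> lists X. length xs = Suc k} = (\<lambda>(x,xs). x # xs) ` (X \<times> {xs \<in> lists X. length xs = k})"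
  proof (intro set_eqI iffI)
    fix ys assume "ys \<in> {xs \<in> lists X. length xs = Suc k}"
    then obtain x xs where "ys = x # xs" "x \<in> X" "xs \<in> lists X" "length xs = k"
      by (cases ys) auto
    then show "ys \<in> (\<lambda>(x,xs). x # xs) ` (X \<times> {xs \<in> lists X. length xs = k})" by force
  qed auto
  have "|{xs \<in> lists X. length xs = Suc k}| \<le>o |X \<times> {xs \<in> lists X. length xs = k}|"
    unfolding e by (rule card_of_image)
  also have "|X \<times> {xs \<in> lists X. length xs = k}| \<le>o |X \<times> X|"
    by (rule card_of_Times_mono2[OF Suc.IH])
  also have "|X \<times> X| \<le>o |X|"
    using card_of_Times_same_infinite[OF inf] ordIso_iff_ordLeq by blast
  finally show ?case .
qed

lemma lists_card:
  assumes inf: "\<not> finite X"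
  shows "|lists X| \<le>o |X|"
proof -
  have e: "lists X = (\<Union>k\<in>(UNIV::nat set). {xs \<in> lists X. length xs = k})"
  proof (intro set_eqI iffI)
    fix xs assume "xs \<in> lists X"
    then have "xs \<in> {ys \<in> lists X. length ys = length xs}" by simp
    then show "xs \<in> (\<Union>k\<in>(UNIV::nat set). {xs \<in> lists X. length xs = k})" by (rule UN_I[OF UNIV_I])
  next
    fix xs assume "xs \<in> (\<Union>k\<in>(UNIV::nat set). {xs \<in> lists X. length xs = k})"
    then show "xs \<in> lists X" by simp
  qed
  have "|\<Union>k\<in>(UNIV::nat set). {xs \<in> lists X. length xs = k}| \<le>o |X|"
  proof (rule card_of_UNION_ordLeq_infinite[OF inf])
    show "|UNIV::nat set| \<le>o |X|" using inf infinite_iff_card_of_nat by blast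
    show "\<forall>k\<in>UNIV. |{xs \<in> lists X. length xs = k}| \<le>o |X|" using lists_len_card[OF inf] by blast
  qed
  then show ?thesis by (simp only: e[symmetric])
qed

lemma fpow_card:
  assumes inf: "\<not> finite X"
  shows "|{Z. Z \<subseteq> X \<and> finite Z}| \<le>o |X|"
proof -
  have "{Z. Z \<subseteq> X \<and> finite Z} \<subseteq> set ` lists X"
  proof
    fix Z assume "Z \<in> {Z. Z \<subseteq> X \<and> finite Z}"
    then have Z: "finite Z" "Z \<subseteq> X" by simp_all
    then obtain xs where xs: "set xs = Z" using finite_list by blast
    then have "xs \<in> lists X" using Z by auto
    then show "Z \<in> set ` lists X" using xs by blast
  qed
  then have "|{Z. Z \<subseteq> X \<and> finite Z}| \<le>o |set ` lists X|" by (rule card_of_mono1)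
  also have "|set ` lists X| \<le>o |lists X|" by (rule card_of_image)
  also have "|lists X| \<le>o |X|" by (rule lists_card[OF inf])
  finally show ?thesis .
qed

lemma small_union_ne_UNIV:
  fixes B :: "'c set \<Rightarrow> 'b set"
  assumes inf: "\<not> finite (UNIV :: 'b set)" and X: "|X| <o |UNIV :: 'b set|"
    and Zs: "\<ZZ> \<subseteq> {Z. Z \<subseteq> X \<and> finite Z}" and fB: "\<And>Z. Z \<in> \<ZZ> \<Longrightarrow> finite (B Z)"
  shows "(\<Union>Z\<in>\<ZZ>. B Z) \<noteq> UNIV"
proof -
  have "|\<Union>Z\<in>\<ZZ>. B Z| <o |UNIV :: 'b set|"
  proof (cases "finite X")
    case True
    have "finite {Z. Z \<subseteq> X}" using True by simp
    moreover have "\<ZZ> \<subseteq> {Z. Z \<subseteq> X}" using Zs by blast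
    ultimately have "finite \<ZZ>" using finite_subset by blast
    then have "finite (\<Union>Z\<in>\<ZZ>. B Z)" using fB by blast
    then show ?thesis using fin_less_inf inf by blast
  next
    case False
    have "|\<ZZ>| \<le>o |X|" using card_of_mono1[OF Zs] fpow_card[OF False] ordLeq_transitive by blast
    moreover have "\<forall>Z\<in>\<ZZ>. |B Z| \<le>o |X|" using fB fin_less_inf[OF _ False] ordLess_imp_ordLeq by blast
    ultimately have "|\<Union>Z\<in>\<ZZ>. B Z| \<le>o |X|" by (rule card_of_UNION_ordLeq_infinite[OF False])
    then show ?thesis using X ordLeq_ordLess_trans by blast
  qed
  then show ?thesis using ordLess_irreflexive[of "|UNIV::'b set|"] by force
qed


lemma emb_mult: "emb (a * b) = emb a * emb b" by (simp add: emb_def)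
lemma emb_one: "emb 1 = 1" by (simp add: emb_def One_fract_def)
lemma emb_pow: "emb (a ^ i) = emb a ^ i"
  by (induction i) (simp_all add: emb_one emb_mult)
lemma emb_inj: "inj emb"
  by (rule injI) (simp add: emb_def eq_fract)

lemma infinite_fract_base:
  assumes "infinite (UNIV :: 'r::idom fract set)"
  shows "infinite (UNIV :: 'r set)"
proof
  assume fin: "finite (UNIV :: 'r set)"
  have "(UNIV :: 'r fract set) \<subseteq> (\<lambda>(a,b). Fract a b) ` (UNIV \<times> UNIV)"
  proof
    fix q :: "'r fract"
    show "q \<in> (\<lambda>(a,b). Fract a b) ` (UNIV \<times> UNIV)" by (cases q) auto
  qed
  then have "finite (UNIV :: 'r fract set)" using fin by (metis finite_SigmaI finite_imageI finite_subset)
  then show False using assms by simp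
qed

locale gpctx = vector_space sc
  for sc :: "'r::idom fract \<Rightarrow> 'v::ab_group_add \<Rightarrow> 'v" +
  fixes M :: "'v set"
  assumes subm: "A_submodule sc M" and fgen: "A_fin_gen sc M"
    and infr: "infinite (UNIV::'r set)" and n1: "dim M \<ge> 1"
begin

lemma M0: "0 \<in> M" and Madd: "x \<in> M \<Longrightarrow> y \<in> M \<Longrightarrow> x + y \<in> M"
  and Msc: "x \<in> M \<Longrightarrow> sc (emb a) x \<in> M"
  using subm unfolding A_submodule_def by blast+

lemma Msum: "finite I \<Longrightarrow> (\<And>i. i \<in> I \<Longrightarrow> f i \<in> M) \<Longrightarrow> sum f I \<in> M"
  by (induction I rule: finite_induct) (auto intro: M0 Madd)

lemma card_M: "|M| \<le>o |UNIV :: 'r set|"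
proof -
  obtain F where F: "finite F" "F \<subseteq> M" and MF: "M = {\<Sum>x\<in>F. sc (emb (c x)) x | c. True}"
    using fgen unfolding A_fin_gen_def by blast
  obtain xs where xs: "set xs = F" "distinct xs" using finite_distinct_list[OF F(1)] by blast
  define \<phi> where "\<phi> cs = (\<Sum>i<length xs. sc (emb (cs!i)) (xs!i))" for cs :: "'r list"
  have "M \<subseteq> \<phi> ` lists UNIV"
  proof
    fix m assume "m \<in> M"
    then obtain c where m: "m = (\<Sum>x\<in>F. sc (emb (c x)) x)" using MF by blast
    have inj: "inj_on (nth xs) {..<length xs}" using inj_on_nth[OF xs(2)] by simp
    have im: "nth xs ` {..<length xs} = F" using xs(1) by (auto simp: set_conv_nth)
    have "m = (\<Sum>i<length xs. sc (emb (c (xs!i))) (xs!i))"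
      unfolding m im[symmetric] sum.reindex[OF inj] by simp
    also have "\<dots> = \<phi> (map c xs)" unfolding \<phi>_def by simp
    finally show "m \<in> \<phi> ` lists UNIV" by blast
  qed
  then have "|M| \<le>o |\<phi> ` lists UNIV|" by (rule card_of_mono1)
  also have "|\<phi> ` lists UNIV| \<le>o |lists (UNIV::'r set)|" by (rule card_of_image)
  also have "|lists (UNIV::'r set)| \<le>o |UNIV::'r set|" using lists_card infr by blast
  finally show ?thesis .
qed

end


context gpctx
begin

definition Bs where "Bs = (SOME B. B \<subseteq> M \<and> independent B \<and> M \<subseteq> span B \<and> card B = dim M)"

lemma Bs: "Bs \<subseteq> M" "independent Bs" "M \<subseteq> span Bs" "card Bs = dim M"
proof -
  obtain B where "B \<subseteq> M" "independent B" "M \<subseteq> span B" "card B = dim M" by (rule basis_exists)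
  then have "\<exists>B. B \<subseteq> M \<and> independent B \<and> M \<subseteq> span B \<and> card B = dim M" by blast
  from someI_ex[OF this] show "Bs \<subseteq> M" "independent Bs" "M \<subseteq> span Bs" "card Bs = dim M"
    unfolding Bs_def by blast+
qed

lemma finBs: "finite Bs" using Bs(4) n1 card.infinite by fastforce

definition bs where "bs = (SOME xs. set xs = Bs \<and> distinct xs)"

lemma bs: "set bs = Bs" "distinct bs" "length bs = dim M"
proof -
  have "\<exists>xs. set xs = Bs \<and> distinct xs" using finite_distinct_list[OF finBs] by blast
  from someI_ex[OF this] show s: "set bs = Bs" and d: "distinct bs" unfolding bs_def by blast+
  show "length bs = dim M" using distinct_card[OF d] s Bs(4) by simp
qed

definition mu where "mu a = (\<Sum>i<dim M. sc (emb a ^ i) (bs!i))"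

lemma mu_M: "mu a \<in> M"
  unfolding mu_def
proof (rule Msum)
  fix i assume "i \<in> {..<dim M}"
  then have "bs!i \<in> M" using bs Bs(1) nth_mem by fastforce
  then show "sc (emb a ^ i) (bs!i) \<in> M" using Msc[of "bs!i" "a^i"] by (simp add: emb_pow)
qed simp

lemma bad_finite:
  assumes ZM: "Z \<subseteq> M" and fZ: "finite Z" and iZ: "independent Z" and cZ: "card Z < dim M"
  shows "finite {a. mu a \<in> span Z}"
proof -
  obtain b where b: "b \<in> Bs" "b \<notin> span Z"
  proof (rule ccontr)
    assume "\<not> thesis"
    then have "Bs \<subseteq> span Z" using that by blast
    then have "card Bs \<le> card Z" using independent_span_bound[OF fZ Bs(2)] by blast
    then show False using Bs(4) cZ by simp
  qed
  define E where "E = extend_basis Z"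
  have iE: "independent E" and ZE: "Z \<subseteq> E" and sE: "span E = UNIV"
    unfolding E_def using iZ by (auto simp: independent_extend_basis extend_basis_superset)
  define R where "R v = representation E v" for v
  obtain e where e: "e \<notin> Z" "R b e \<noteq> 0"
  proof (rule ccontr)
    assume "\<not> thesis"
    then have sub: "{x. R b x \<noteq> 0} \<subseteq> Z" using that by blast
    have "b = (\<Sum>x | R b x \<noteq> 0. sc (R b x) x)"
      unfolding R_def using sum_nonzero_representation_eq[OF iE, of b] sE by simp
    also have "\<dots> \<in> span Z"
      by (rule span_sum) (use sub in \<open>auto intro: span_scale span_base\<close>)
    finally show False using b by simp
  qed
  have vanish: "R v e = 0" if "v \<in> span Z" for v
  proof -
    have "R v = representation Z v" unfolding R_def by (rule representation_extend[OF iE that ZE])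
    then show ?thesis using e(1) representation_ne_zero[of Z v e] by auto
  qed
  define c where "c i = R (bs!i) e" for i
  have Rmu: "R (mu a) e = (\<Sum>i<dim M. c i * emb a ^ i)" for a
  proof -
    have "R (mu a) = (\<lambda>x. \<Sum>i<dim M. R (sc (emb a ^ i) (bs!i)) x)"
      unfolding mu_def R_def by (rule representation_sum[OF iE]) (simp add: sE)
    moreover have "R (sc (emb a ^ i) (bs!i)) = (\<lambda>x. emb a ^ i * R (bs!i) x)" for i
      unfolding R_def by (rule representation_scale[OF iE]) (simp add: sE)
    ultimately show ?thesis unfolding c_def by (simp add: mult.commute)
  qed
  define p where "p = (\<Sum>i<dim M. monom (c i) i)"
  have poly_p: "poly p x = (\<Sum>i<dim M. c i * x ^ i)" for x
    unfolding p_def by (simp add: poly_sum poly_monom)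
  obtain j where j: "j < dim M" "bs!j = b" using b(1) bs by (metis in_set_conv_nth)
  have "coeff p j = c j"
    unfolding p_def coeff_sum using j(1) by (simp add: sum.delta)
  then have pnz: "p \<noteq> 0" using e(2) j(2) unfolding c_def by auto
  have "{a. mu a \<in> span Z} \<subseteq> emb -` {x. poly p x = 0}"
  proof
    fix a assume "a \<in> {a. mu a \<in> span Z}"
    then have "R (mu a) e = 0" using vanish by blast
    then show "a \<in> emb -` {x. poly p x = 0}" using Rmu poly_p by simp
  qed
  moreover have "finite (emb -` {x. poly p x = 0})"
    by (rule finite_vimageI[OF poly_roots_finite[OF pnz] emb_inj])
  ultimately show ?thesis using finite_subset by blast
qed

lemma avoid:
  assumes X: "|X| <o |UNIV :: 'r set|"
  shows "\<exists>m\<in>M. \<forall>Z. Z \<subseteq> X \<longrightarrow> Z \<subseteq> M \<longrightarrow> finite Z \<longrightarrow> independent Z \<longrightarrow> card Z < dim M \<longrightarrow> m \<notin> span Z"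
proof -
  define \<ZZ> where "\<ZZ> = {Z. Z \<subseteq> X \<and> Z \<subseteq> M \<and> finite Z \<and> independent Z \<and> card Z < dim M}"
  have "(\<Union>Z\<in>\<ZZ>. {a. mu a \<in> span Z}) \<noteq> UNIV"
    by (rule small_union_ne_UNIV[OF infr X]) (auto simp: \<ZZ>_def intro: bad_finite)
  then obtain a where a: "a \<notin> (\<Union>Z\<in>\<ZZ>. {a. mu a \<in> span Z})" by blast
  show ?thesis
  proof (intro bexI[OF _ mu_M] allI impI)
    fix Z assume "Z \<subseteq> X" "Z \<subseteq> M" "finite Z" "independent Z" "card Z < dim M"
    then have "Z \<in> \<ZZ>" unfolding \<ZZ>_def by blast
    then show "mu a \<notin> span Z" using a by blast
  qed
qed

end


lemma max_exists:
  assumes "finite C" "C \<noteq> {}" "trans r" "\<forall>x\<in>C. \<forall>y\<in>C. x \<noteq> y \<longrightarrow> (x,y) \<in> r \<or> (y,x) \<in> r"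
  shows "\<exists>y\<in>C. \<forall>y'\<in>C. y' = y \<or> (y',y) \<in> r"
  using assms
proof (induction C rule: finite_ne_induct)
  case (singleton x) then show ?case by blast
next
  case (insert x F)
  then obtain m where m: "m \<in> F" "\<forall>y'\<in>F. y' = m \<or> (y',m) \<in> r" by blast
  show ?case
  proof (cases "x = m \<or> (x,m) \<in> r")
    case True then show ?thesis using m by blast
  next
    case False
    then have "(m,x) \<in> r" using insert.prems(2) m(1) by blast
    have tr: "trans r" using insert.prems by blast
    have "\<forall>y'\<in>insert x F. y' = x \<or> (y',x) \<in> r"
    proof
      fix y' assume "y' \<in> insert x F"
      then consider "y' = x" | "y' = m" | "(y',m) \<in> r" using m(2) by blast
      then show "y' = x \<or> (y',x) \<in> r"
        by cases (use \<open>(m,x) \<in> r\<close> tr in \<open>auto intro: transD\<close>)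
    qed
    then show ?thesis by blast
  qed
qed

context gpctx
begin

definition Und :: "('v \<times> 'v) set \<Rightarrow> 'v \<Rightarrow> 'v set" where
  "Und r y = {x\<in>M. (x,y) \<in> r \<and> x \<noteq> y}"

lemma gen_indep:
  assumes Gen: "\<And>y Z. y \<in> M \<Longrightarrow> Z \<subseteq> insert y (Und r y) \<union> g ` Und r y \<union> {w} \<Longrightarrow> Z \<subseteq> M \<Longrightarrow> finite Z
      \<Longrightarrow> independent Z \<Longrightarrow> card Z < dim M \<Longrightarrow> g y \<notin> span Z"
    and gM: "g ` M \<subseteq> M" and tr: "trans r"
    and QM: "Q \<subseteq> M" "finite Q" and tot: "\<forall>x\<in>Q. \<forall>y\<in>Q. x \<noteq> y \<longrightarrow> (x,y) \<in> r \<or> (y,x) \<in> r"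
    and BM: "B \<subseteq> M" "finite B" and baseB: "\<And>Z. Z \<subseteq> B \<Longrightarrow> card Z \<le> dim M \<Longrightarrow> independent Z"
    and Bx: "\<And>x y. x \<in> B \<Longrightarrow> y \<in> Q \<Longrightarrow> x \<in> insert y (Und r y) \<union> g ` Und r y \<union> {w}"
  shows "Z \<subseteq> B \<union> g ` Q \<Longrightarrow> card Z \<le> dim M \<Longrightarrow> independent Z"
proof (induction "card Z" arbitrary: Z rule: less_induct)
  case less
  have fZ: "finite Z" using less.prems(1) BM(2) QM(2) finite_subset by blast
  show ?case
  proof (cases "Z \<subseteq> B")
    case True then show ?thesis using baseB less.prems(2) by blast
  next
    case False
    define C where "C = {y\<in>Q. g y \<in> Z - B}"
    have "C \<noteq> {}" using False less.prems(1) unfolding C_def by blast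
    moreover have "finite C" using QM(2) unfolding C_def by simp
    moreover have "\<forall>x\<in>C. \<forall>y\<in>C. x \<noteq> y \<longrightarrow> (x,y) \<in> r \<or> (y,x) \<in> r" using tot unfolding C_def by blast
    ultimately obtain y where y: "y \<in> C" and ymax: "\<forall>y'\<in>C. y' = y \<or> (y',y) \<in> r"
      using max_exists[OF _ _ tr] by blast
    have yQ: "y \<in> Q" "g y \<in> Z" using y unfolding C_def by blast+
    define Z' where "Z' = Z - {g y}"
    have "card Z > 0" using fZ yQ(2) card_gt_0_iff by blast
    then have cZ': "card Z' < card Z" unfolding Z'_def using fZ yQ(2) by simp
    have Z'sub: "Z' \<subseteq> B \<union> g ` Q" using less.prems(1) unfolding Z'_def by blast
    have iZ': "independent Z'" using less.hyps[OF cZ' Z'sub] cZ' less.prems(2) by simp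
    have Z'X: "Z' \<subseteq> insert y (Und r y) \<union> g ` Und r y \<union> {w}"
    proof
      fix z assume z: "z \<in> Z'"
      show "z \<in> insert y (Und r y) \<union> g ` Und r y \<union> {w}"
      proof (cases "z \<in> B")
        case True then show ?thesis using Bx yQ(1) by blast
      next
        case False
        then obtain y' where y': "y' \<in> Q" "z = g y'" using z Z'sub by blast
        then have "y' \<in> C" using z False unfolding C_def Z'_def by blast
        then have "y' = y \<or> (y',y) \<in> r" using ymax by blast
        moreover have "y' \<noteq> y" using z y' unfolding Z'_def by blast
        ultimately have "y' \<in> Und r y" using y' QM(1) unfolding Und_def by blast
        then show ?thesis using y' by blast
      qed
    qed
    have Z'M: "Z' \<subseteq> M" using Z'sub BM(1) QM(1) gM by blast
    have "g y \<notin> span Z'"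
      using Gen[OF _ Z'X Z'M] yQ(1) QM(1) fZ iZ' cZ' less.prems(2) unfolding Z'_def by auto
    then have "independent (insert (g y) Z')" using iZ' by (rule independent_insertI)
    moreover have "insert (g y) Z' = Z" using yQ(2) unfolding Z'_def by blast
    ultimately show ?thesis by simp
  qed
qed

end


context gpctx
begin

definition rM where "rM = |M|"

lemma rM: "Well_order rM" "Field rM = M" "trans rM" "wf (rM - Id)"
  "\<And>x y. x \<in> M \<Longrightarrow> y \<in> M \<Longrightarrow> x \<noteq> y \<Longrightarrow> (x,y) \<in> rM \<or> (y,x) \<in> rM"
proof -
  show w: "Well_order rM" unfolding rM_def by (rule card_of_Well_order)
  show f: "Field rM = M" unfolding rM_def by (rule Field_card_of)
  have wo: "wo_rel rM" using w by (simp add: wo_rel_def)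
  show "trans rM" by (rule wo_rel.TRANS[OF wo])
  show "wf (rM - Id)" by (rule wo_rel.WF[OF wo])
  show "\<And>x y. x \<in> M \<Longrightarrow> y \<in> M \<Longrightarrow> x \<noteq> y \<Longrightarrow> (x,y) \<in> rM \<or> (y,x) \<in> rM"
  proof -
    fix x y assume "x \<in> M" "y \<in> M"
    then have "x \<in> Field rM" "y \<in> Field rM" using f by simp_all
    then show "(x,y) \<in> rM \<or> (y,x) \<in> rM" using wo_rel.TOTALS[OF wo] by blast
  qed
qed

definition w where "w = bs ! 0"

lemma w: "w \<in> M" "w \<noteq> 0"
proof -
  have "0 < length bs" using bs(3) n1 by simp
  then have "w \<in> Bs" unfolding w_def using bs(1) nth_mem by blast
  then show "w \<in> M" using Bs(1) by blast
  show "w \<noteq> 0"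
  proof
    assume "w = 0"
    then have "0 \<in> Bs" using \<open>w \<in> Bs\<close> by simp
    then have "dependent Bs" by (rule dependent_zero)
    then show False using Bs(2) by simp
  qed
qed

definition Xh :: "('v \<Rightarrow> 'v) \<Rightarrow> 'v \<Rightarrow> 'v set" where
  "Xh h y = insert y (Und rM y) \<union> h ` Und rM y \<union> {w}"

lemma card_Xh:
  assumes y: "y \<in> M"
  shows "|Xh h y| <o |UNIV :: 'r set|"
proof -
  have "Und rM y \<subseteq> underS rM y" unfolding Und_def underS_def by blast
  then have "|Und rM y| \<le>o |underS rM y|" by (rule card_of_mono1)
  also have "|underS rM y| <o rM" using card_of_underS[OF card_of_Card_order, of y M] rM(2) y
    unfolding rM_def by simp
  also have "rM \<le>o |UNIV :: 'r set|" unfolding rM_def by (rule card_M)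
  finally have U: "|Und rM y| <o |UNIV :: 'r set|" .
  have U2: "|h ` Und rM y| <o |UNIV :: 'r set|" by (rule ordLeq_ordLess_trans[OF card_of_image U])
  have "finite {y, w}" by simp
  then have F: "|{y, w}| <o |UNIV :: 'r set|" by (rule fin_less_inf[OF _ infr])
  have e: "Xh h y = (Und rM y \<union> h ` Und rM y) \<union> {y, w}" unfolding Xh_def by blast
  show ?thesis unfolding e
    by (intro card_of_Un_ordLess_infinite[OF infr] U U2 F)
qed

definition genprop :: "('v \<Rightarrow> 'v) \<Rightarrow> 'v \<Rightarrow> 'v \<Rightarrow> bool" where
  "genprop h y m \<longleftrightarrow> m \<in> M \<and> (\<forall>Z. Z \<subseteq> Xh h y \<longrightarrow> Z \<subseteq> M \<longrightarrow> finite Z \<longrightarrow> independent Z \<longrightarrow> card Z < dim M \<longrightarrow> m \<notin> span Z)"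

definition step where "step h y = (SOME m. genprop h y m)"

definition gg where "gg = wfrec (rM - Id) step"

lemma gg: assumes y: "y \<in> M" shows "genprop gg y (gg y)"
proof -
  have e1: "gg y = step (cut gg (rM - Id) y) y"
    unfolding gg_def by (rule wfrec[OF rM(4)])
  have e2: "Xh (cut gg (rM - Id) y) y = Xh gg y"
  proof -
    have cg: "cut gg (rM - Id) y x = gg x" if "x \<in> Und rM y" for x
    proof (rule cut_apply)
      show "(x, y) \<in> rM - Id" using that unfolding Und_def by blast
    qed
    have "cut gg (rM - Id) y ` Und rM y = gg ` Und rM y" by (rule image_cong[OF refl cg])
    then show ?thesis unfolding Xh_def by simp
  qed
  from avoid[OF card_Xh[OF y]] obtain m where m: "m \<in> M"
    and mZ: "\<forall>Z. Z \<subseteq> Xh (cut gg (rM - Id) y) y \<longrightarrow> Z \<subseteq> M \<longrightarrow> finite Z \<longrightarrow> independent Z \<longrightarrow> card Z < dim M \<longrightarrow> m \<notin> span Z" ..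
  have "genprop (cut gg (rM - Id) y) y m" unfolding genprop_def by (intro conjI m mZ)
  then have "\<exists>m. genprop (cut gg (rM - Id) y) y m" ..
  then have "genprop (cut gg (rM - Id) y) y (step (cut gg (rM - Id) y) y)"
    unfolding step_def by (rule someI_ex)
  then show ?thesis unfolding e1[symmetric] genprop_def e2 .
qed

lemma ggM: "gg ` M \<subseteq> M"
proof
  fix z assume "z \<in> gg ` M"
  then obtain y where y: "y \<in> M" "z = gg y" by blast
  have "genprop gg y (gg y)" by (rule gg[OF y(1)])
  then show "z \<in> M" unfolding genprop_def y(2) by (rule conjunct1)
qed

lemma Gen: "y \<in> M \<Longrightarrow> Z \<subseteq> insert y (Und rM y) \<union> gg ` Und rM y \<union> {w} \<Longrightarrow> Z \<subseteq> M \<Longrightarrow> finite Z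
      \<Longrightarrow> independent Z \<Longrightarrow> card Z < dim M \<Longrightarrow> gg y \<notin> span Z"
proof -
  assume a: "y \<in> M" "Z \<subseteq> insert y (Und rM y) \<union> gg ` Und rM y \<union> {w}" "Z \<subseteq> M" "finite Z"
      "independent Z" "card Z < dim M"
  have "genprop gg y (gg y)" by (rule gg[OF a(1)])
  then have "\<forall>Z. Z \<subseteq> Xh gg y \<longrightarrow> Z \<subseteq> M \<longrightarrow> finite Z \<longrightarrow> independent Z \<longrightarrow> card Z < dim M \<longrightarrow> gg y \<notin> span Z"
    unfolding genprop_def by (rule conjunct2)
  then show "gg y \<notin> span Z" using a(2-6) unfolding Xh_def by blast
qed

lemma gp_mem: "Y \<in> gp_simplices sc M \<longleftrightarrow> Y \<noteq> {} \<and> finite Y \<and> Y \<subseteq> M \<and> (\<forall>Z\<subseteq>Y. card Z \<le> dim M \<longrightarrow> independent Z)"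
  unfolding gp_simplices_def by simp

lemma gp_down: "downclosed (gp_simplices sc M)"
  unfolding downclosed_def
proof (intro ballI conjI allI impI)
  fix \<sigma> assume s: "\<sigma> \<in> gp_simplices sc M"
  then have s1: "\<sigma> \<noteq> {}" "finite \<sigma>" "\<sigma> \<subseteq> M" and s2: "\<forall>Z\<subseteq>\<sigma>. card Z \<le> dim M \<longrightarrow> independent Z"
    unfolding gp_mem by blast+
  show "finite \<sigma>" "\<sigma> \<noteq> {}" by (fact s1(2)) (fact s1(1))
  fix \<tau> assume t: "\<tau> \<subseteq> \<sigma> \<and> \<tau> \<noteq> {}"
  have "finite \<tau>" using t s1(2) finite_subset by blast
  moreover have "\<tau> \<subseteq> M" using t s1(3) by blast
  moreover have "\<forall>Z\<subseteq>\<tau>. card Z \<le> dim M \<longrightarrow> independent Z" using t s2 by blast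
  ultimately show "\<tau> \<in> gp_simplices sc M" unfolding gp_mem using t by blast
qed

theorem gp_contractible: "contractible_space (realisation (gp_simplices sc M))"
proof (rule contract[OF gp_down rM(3)])
  show "\<And>\<sigma> x y. \<sigma> \<in> gp_simplices sc M \<Longrightarrow> x \<in> \<sigma> \<Longrightarrow> y \<in> \<sigma> \<Longrightarrow> x \<noteq> y \<Longrightarrow> (x,y) \<in> rM \<or> (y,x) \<in> rM"
  proof -
    fix \<sigma> x y assume "\<sigma> \<in> gp_simplices sc M" "x \<in> \<sigma>" "y \<in> \<sigma>" "x \<noteq> y"
    moreover then have "\<sigma> \<subseteq> M" unfolding gp_mem by blast
    ultimately show "(x,y) \<in> rM \<or> (y,x) \<in> rM" using rM(5) by blast
  qed
next
  fix \<sigma> P Q assume s: "\<sigma> \<in> gp_simplices sc M" and P: "P \<subseteq> \<sigma>" and Q: "Q \<subseteq> \<sigma>"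
    and ord: "\<forall>x\<in>P. \<forall>y\<in>Q. x = y \<or> (x,y) \<in> rM" and ne: "P \<union> gg ` Q \<noteq> {}"
  have sM: "\<sigma> \<subseteq> M" "finite \<sigma>" and si: "\<And>Z. Z \<subseteq> \<sigma> \<Longrightarrow> card Z \<le> dim M \<Longrightarrow> independent Z"
    using s unfolding gp_mem by blast+
  have QM: "Q \<subseteq> M" "finite Q" using Q sM finite_subset by blast+
  have PM: "P \<subseteq> M" "finite P" using P sM finite_subset by blast+
  have ind: "\<And>Z. Z \<subseteq> P \<union> gg ` Q \<Longrightarrow> card Z \<le> dim M \<Longrightarrow> independent Z"
  proof (rule gen_indep[OF Gen ggM rM(3) QM _ PM])
    show "\<forall>x\<in>Q. \<forall>y\<in>Q. x \<noteq> y \<longrightarrow> (x,y) \<in> rM \<or> (y,x) \<in> rM" using rM(5) QM by blast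
    show "\<And>Z. Z \<subseteq> P \<Longrightarrow> card Z \<le> dim M \<Longrightarrow> independent Z" using si P by blast
    show "\<And>x y. x \<in> P \<Longrightarrow> y \<in> Q \<Longrightarrow> x \<in> insert y (Und rM y) \<union> gg ` Und rM y \<union> {w}"
      using ord PM(1) unfolding Und_def by blast
  qed (assumption+)
  show "P \<union> gg ` Q \<in> gp_simplices sc M"
    unfolding gp_mem
  proof (intro conjI)
    show "P \<union> gg ` Q \<noteq> {}" by (rule ne)
    show "finite (P \<union> gg ` Q)" using PM(2) QM(2) by simp
    show "P \<union> gg ` Q \<subseteq> M" using PM(1) QM(1) ggM by blast
    show "\<forall>Z\<subseteq>P \<union> gg ` Q. card Z \<le> dim M \<longrightarrow> independent Z" using ind by simp
  qed
next
  fix \<sigma> P Q assume s: "\<sigma> \<in> gp_simplices sc M" and P: "P \<subseteq> \<sigma>" and Q: "Q \<subseteq> \<sigma>"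
    and ne: "gg ` P \<union> (\<lambda>_. w) ` Q \<noteq> {}"
  have sM: "\<sigma> \<subseteq> M" "finite \<sigma>" using s unfolding gp_mem by blast+
  have PM: "P \<subseteq> M" "finite P" using P sM finite_subset by blast+
  have ind: "\<And>Z. Z \<subseteq> {w} \<union> gg ` P \<Longrightarrow> card Z \<le> dim M \<Longrightarrow> independent Z"
  proof (rule gen_indep[OF Gen ggM rM(3) PM _ _])
    show "\<forall>x\<in>P. \<forall>y\<in>P. x \<noteq> y \<longrightarrow> (x,y) \<in> rM \<or> (y,x) \<in> rM" using rM(5) PM by blast
    show "{w} \<subseteq> M" using w(1) by simp
    show "finite {w}" by simp
    show "\<And>Z. Z \<subseteq> {w} \<Longrightarrow> card Z \<le> dim M \<Longrightarrow> independent Z"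
    proof -
      fix Z assume "Z \<subseteq> {w}"
      then have "Z = {} \<or> Z = {w}" by (simp add: subset_singleton_iff)
      then show "independent Z" by (elim disjE) (simp_all add: w(2) independent_empty)
    qed
    show "\<And>x y. x \<in> {w} \<Longrightarrow> y \<in> P \<Longrightarrow> x \<in> insert y (Und rM y) \<union> gg ` Und rM y \<union> {w}" by blast
  qed (assumption+)
  have sub: "gg ` P \<union> (\<lambda>_. w) ` Q \<subseteq> {w} \<union> gg ` P" by auto
  show "gg ` P \<union> (\<lambda>_. w) ` Q \<in> gp_simplices sc M"
    unfolding gp_mem
  proof (intro conjI)
    show "gg ` P \<union> (\<lambda>_. w) ` Q \<noteq> {}" by (rule ne)
    have "finite Q" using Q sM(2) finite_subset by blast
    then show "finite (gg ` P \<union> (\<lambda>_. w) ` Q)" using PM(2) by simp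
    show "gg ` P \<union> (\<lambda>_. w) ` Q \<subseteq> M" using PM ggM w by blast
    show "\<forall>Z\<subseteq>gg ` P \<union> (\<lambda>_. w) ` Q. card Z \<le> dim M \<longrightarrow> independent Z"
    proof (intro allI impI)
      fix Z assume Z: "Z \<subseteq> gg ` P \<union> (\<lambda>_. w) ` Q" "card Z \<le> dim M"
      show "independent Z" by (rule ind[OF order_trans[OF Z(1) sub] Z(2)])
    qed
  qed
qed

end


theorem proposition8p1:
  fixes sc :: "'a::idom fract \<Rightarrow> 'v::ab_group_add \<Rightarrow> 'v"
    and M :: "'v set"
  assumes "noetherian TYPE('a)"
    and "infinite (UNIV :: 'a fract set)"
    and "vector_space sc"
    and "A_submodule sc M"
    and "A_fin_gen sc M"
    and "vector_space.dim sc M \<ge> 2"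
  shows "contractible_space (realisation (gp_simplices sc M))"
proof -
  have "gpctx sc M"
    unfolding gpctx_def gpctx_axioms_def
    using assms infinite_fract_base[OF assms(2)] by simp
  then show ?thesis by (rule gpctx.gp_contractible)
qed

end
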